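(* Let $n=rk$, let $f:\mathbb{F}_{2^n}\to\mathbb{F}_{2^k}$, let $L:\mathbb{F}_{2^n}\to\mathbb{F}_{2^n}$ be an $\mathbb{F}_{2^k}$-linear permutation of $\mathbb{F}_{2^n}$, and let $g:\mathbb{F}_{2^k}\to\mathbb{F}_{2^k}$ be a permutation. Let $i\in\{0,\dots,k-1\}$, $\gamma\in\mathbb{F}_{2^n}^*$ and $a\in\mathbb{F}_{2^k}^*$ be such that $f(x+u\gamma)+f(x)=u^{2^i}a$ for all $x\in\mathbb{F}_{2^n}$ and all $u\in\mathbb{F}_{2^k}$. Then $$\phi(x)=L(x)+L(\gamma)\left(g(f(x))+\frac{f(x)}{a}\right)^{2^{n-i}}$$ is a permutation of $\mathbb{F}_{2^n}$, and its inverse is $$\phi^{-1}(x)=L^{-1}(x)+\gamma\, a^{-2^{n-i}}\left(g^{-1}\!\left(\frac{f(L^{-1}(x))}{a}\right)+f(L^{-1}(x))\right)^{2^{n-i}}.$$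
   Context: An $\mathbb{F}_{2^k}$-linear function on $\mathbb{F}_{2^n}$ is one of the form $L(x)=\sum_{j=0}^{r-1}\lambda_j x^{2^{kj}}$ with $\lambda_j\in\mathbb{F}_{2^n}$; $L^{-1}$ and $g^{-1}$ denote compositional inverses. *)

theory Defs
  imports Main
begin

text \<open>The subfield F_{2^k} of a finite field of order 2^n (k dividing n) is the set
  of fixed points of the Frobenius power x \<mapsto> x^(2^k).\<close>
definition subfield_pow2 :: "nat \<Rightarrow> 'a::field set" where
  "subfield_pow2 k = {x. x ^ (2 ^ k) = x}"

definition Fq_linear :: "nat \<Rightarrow> nat \<Rightarrow> ('a::field \<Rightarrow> 'a) \<Rightarrow> bool" where
  "Fq_linear k r L \<longleftrightarrow> (\<exists>lam :: nat \<Rightarrow> 'a. \<forall>x. L x = (\<Sum>j<r. lam j * x ^ (2 ^ (k * j))))"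

end

theory Submission
  imports Defs
begin

lemma char2_fin:
  assumes "card (UNIV :: 'a::{field,finite} set) = 2 ^ n"
  shows "(2::'a) = 0"
proof -
  have "(\<Sum>y\<in>(UNIV::'a set). (1 + y)) = (\<Sum>y\<in>UNIV. y)"
    by (rule sum.reindex_bij_witness[of _ "\<lambda>y. y - 1" "\<lambda>y. 1 + y"]) auto
  hence "of_nat (card (UNIV::'a set)) + (\<Sum>y\<in>(UNIV::'a set). y) = (\<Sum>y\<in>UNIV. y)"
    by (simp add: sum.distrib)
  hence "(of_nat (2 ^ n) :: 'a) = 0" using assms by simp
  hence "(2::'a) ^ n = 0" by simp
  thus ?thesis by simp
qed

lemma frob_fin:
  fixes x :: "'a::{field,finite}"
  shows "x ^ card (UNIV :: 'a set) = x"
proof (cases "x = 0")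
  case True
  have "card (UNIV :: 'a set) > 0" by (simp add: finite_UNIV_card_ge_0)
  then show ?thesis using True by (simp add: power_0_left)
next
  case False
  define S where "S = (UNIV :: 'a set) - {0}"
  have bS: "bij_betw (\<lambda>y. x * y) S S"
    by (rule bij_betw_byWitness[of _ "\<lambda>y. y / x"]) (auto simp: S_def False)
  have "(\<Prod>y\<in>S. x * y) = (\<Prod>y\<in>S. y)"
    using prod.reindex_bij_betw[OF bS, of "\<lambda>y. y"] by simp
  moreover have "(\<Prod>y\<in>S. x * y) = x ^ card S * (\<Prod>y\<in>S. y)"
    by (simp add: prod.distrib)
  moreover have "(\<Prod>y\<in>S. y) \<noteq> 0" by (simp add: S_def)
  ultimately have "x ^ card S = 1" by simp
  moreover have "card S = card (UNIV :: 'a set) - 1" by (simp add: S_def card_Diff_singleton)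
  moreover have "card (UNIV :: 'a set) > 0" by (simp add: finite_UNIV_card_ge_0)
  ultimately have "card (UNIV :: 'a set) = Suc (card S)" by simp
  then show ?thesis using \<open>x ^ card S = 1\<close> by simp
qed

lemma frob_add:
  fixes x y :: "'a::field"
  assumes "(2::'a) = 0"
  shows "(x + y) ^ (2 ^ m) = x ^ (2 ^ m) + y ^ (2 ^ m)"
proof (induction m)
  case 0 then show ?case by simp
next
  case (Suc m)
  have sq: "(u + v)^2 = u^2 + v^2" for u v :: 'a
  proof -
    have "(u + v)^2 = u^2 + v^2 + 2 * u * v" by (simp add: power2_eq_square algebra_simps)
    thus ?thesis using assms by simp
  qed
  have "(x + y) ^ (2 ^ Suc m) = ((x + y) ^ (2 ^ m))^2" by (simp add: power_mult[symmetric] mult.commute)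
  also have "\<dots> = (x ^ (2 ^ m))^2 + (y ^ (2 ^ m))^2" using Suc sq by simp
  also have "\<dots> = x ^ (2 ^ Suc m) + y ^ (2 ^ Suc m)" by (simp add: power_mult[symmetric] mult.commute)
  finally show ?case .
qed

lemma neg_char2:
  fixes x :: "'a::field"
  assumes "(2::'a) = 0"
  shows "x + x = 0"
proof -
  have "x + x = 2 * x" by simp
  thus ?thesis using assms by simp
qed

lemma F_iter:
  fixes t :: "'a::field"
  assumes "t ^ (2 ^ k) = t"
  shows "t ^ (2 ^ (k * j)) = t"
proof (induction j)
  case 0 then show ?case by simp
next
  case (Suc j)
  have "t ^ (2 ^ (k * Suc j)) = (t ^ (2 ^ (k * j))) ^ (2 ^ k)"
    by (simp add: power_mult[symmetric] power_add mult.commute)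
  then show ?case using Suc assms by simp
qed

lemma F_pow:
  fixes t :: "'a::field"
  assumes "t ^ (2 ^ k) = t"
  shows "(t ^ m) ^ (2 ^ k) = t ^ m"
  by (metis assms power_mult mult.commute)

theorem proposition8:
  fixes n r k i :: nat
    and f L :: "'a::{field,finite} \<Rightarrow> 'a"
    and g :: "'a \<Rightarrow> 'a"
    and \<gamma> a :: 'a
  assumes card: "card (UNIV :: 'a set) = 2 ^ n"
    and nrk: "n = r * k"
    and f_range: "\<forall>x. f x \<in> subfield_pow2 k"
    and L_lin: "Fq_linear k r L"
    and L_bij: "bij L"
    and g_perm: "bij_betw g (subfield_pow2 k) (subfield_pow2 k)"
    and i_lt: "i < k"
    and gamma_nz: "\<gamma> \<noteq> 0"
    and a_in: "a \<in> subfield_pow2 k" and a_nz: "a \<noteq> 0"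
    and deriv: "\<forall>x. \<forall>u \<in> subfield_pow2 k. f (x + u * \<gamma>) + f x = u ^ (2 ^ i) * a"
  shows "bij (\<lambda>x. L x + L \<gamma> * (g (f x) + f x / a) ^ (2 ^ (n - i)))
       \<and> inv (\<lambda>x. L x + L \<gamma> * (g (f x) + f x / a) ^ (2 ^ (n - i)))
         = (\<lambda>x. inv L x + \<gamma> * inverse (a ^ (2 ^ (n - i)))
              * (inv_into (subfield_pow2 k) g (f (inv L x) / a) + f (inv L x)) ^ (2 ^ (n - i)))"
proof -
  define F where "F = (subfield_pow2 k :: 'a set)"
  have c2: "(2::'a) = 0" using char2_fin[OF card] .
  have frob: "x ^ (2 ^ n) = x" for x :: 'a using frob_fin[of x] card by simp
  have Fmem: "t \<in> F \<longleftrightarrow> t ^ (2 ^ k) = t" for t by (simp add: F_def subfield_pow2_def)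
  have Fadd: "s + t \<in> F" if "s \<in> F" "t \<in> F" for s t
    using that frob_add[OF c2, of s t k] Fmem by simp
  have Fdiv: "s / t \<in> F" if "s \<in> F" "t \<in> F" for s t
    using that Fmem by (simp add: power_divide)
  have Fpw: "t ^ m \<in> F" if "t \<in> F" for t m using that Fmem F_pow by blast
  have card2: "card (UNIV :: 'a set) \<ge> 2"
  proof -
    have "card {0::'a, 1} \<le> card (UNIV :: 'a set)" by (rule card_mono) auto
    thus ?thesis by simp
  qed
  have n_pos: "n > 0" using card card2 by (cases n) auto
  have i_le: "i \<le> n" using nrk n_pos i_lt by (cases r) auto
  obtain lam :: "nat \<Rightarrow> 'a" where lam: "\<And>x. L x = (\<Sum>j<r. lam j * x ^ (2 ^ (k * j)))"
    using L_lin unfolding Fq_linear_def by blast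
  have Llin: "L (x + t * \<gamma>) = L x + t * L \<gamma>" if "t \<in> F" for x t
  proof -
    have tj: "t ^ (2 ^ (k * j)) = t" for j using F_iter that Fmem by blast
    have tj': "t ^ (2 ^ (j * k)) = t" for j using tj by (simp add: mult.commute)
    have "L (x + t * \<gamma>) = (\<Sum>j<r. lam j * x ^ (2 ^ (k * j)) + t * (lam j * \<gamma> ^ (2 ^ (k * j))))"
      unfolding lam by (rule sum.cong) (auto simp: frob_add[OF c2] power_mult_distrib tj tj' algebra_simps)
    also have "\<dots> = L x + t * L \<gamma>" unfolding lam by (simp add: sum.distrib sum_distrib_left)
    finally show ?thesis .
  qed
  have ginj: "inj_on g F" using g_perm bij_betw_imp_inj_on F_def by blast
  have gF: "g s \<in> F" if "s \<in> F" for s using g_perm that F_def bij_betwE by blast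
  have fF: "f x \<in> F" for x using f_range F_def by simp
  have aF: "a \<in> F" using a_in F_def by simp
  define s where "s x = g (f x) + f x / a" for x
  define T where "T x = s x ^ (2 ^ (n - i))" for x
  define \<psi> where "\<psi> x = x + T x * \<gamma>" for x
  define \<phi> where "\<phi> = (\<lambda>x. L x + L \<gamma> * (g (f x) + f x / a) ^ (2 ^ (n - i)))"
  define G where "G = (\<lambda>x. x + \<gamma> * inverse (a ^ (2 ^ (n - i)))
              * (inv_into (subfield_pow2 k) g (f x / a) + f x) ^ (2 ^ (n - i)))"
  have sF: "s x \<in> F" for x unfolding s_def using Fadd gF fF Fdiv aF by blast
  have TF: "T x \<in> F" for x unfolding T_def using Fpw sF by blast
  have Ti: "T x ^ (2 ^ i) = s x" for x
  proof -
    have "T x ^ (2 ^ i) = s x ^ (2 ^ (n - i) * 2 ^ i)" unfolding T_def by (simp add: power_mult)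
    also have "2 ^ (n - i) * 2 ^ i = (2::nat) ^ n" using i_le by (simp add: power_add[symmetric])
    finally show ?thesis using frob by simp
  qed
  have negx: "u + v = w \<Longrightarrow> u = w + v" for u v w :: 'a
    using neg_char2[OF c2, of v] by (metis add.assoc add_0_right)
  have fpsi: "f (\<psi> x) = a * g (f x)" for x
  proof -
    have "f (x + T x * \<gamma>) + f x = T x ^ (2 ^ i) * a" using deriv TF F_def by blast
    hence "f (\<psi> x) = T x ^ (2 ^ i) * a + f x" unfolding \<psi>_def by (rule negx)
    also have "\<dots> = a * g (f x) + (f x + f x)" using a_nz by (simp add: Ti s_def algebra_simps)
    finally show ?thesis using neg_char2[OF c2] by simp
  qed
  have Gpsi: "G (\<psi> x) = x" for x
  proof -
    have "inv_into F g (f (\<psi> x) / a) = f x"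
      using fpsi a_nz inv_into_f_f[OF ginj fF] by simp
    hence "inv_into F g (f (\<psi> x) / a) + f (\<psi> x) = a * s x"
      using fpsi a_nz by (simp add: s_def algebra_simps)
    hence "G (\<psi> x) = \<psi> x + \<gamma> * inverse (a ^ (2 ^ (n - i))) * (a ^ (2 ^ (n - i)) * T x)"
      unfolding G_def T_def F_def by (simp add: power_mult_distrib)
    also have "\<dots> = \<psi> x + T x * \<gamma>" using a_nz by simp
    also have "\<dots> = x + (T x * \<gamma> + T x * \<gamma>)" unfolding \<psi>_def by (simp add: algebra_simps)
    finally show ?thesis using neg_char2[OF c2] by simp
  qed
  have phi_eq: "\<phi> x = L (\<psi> x)" for x
    unfolding \<phi>_def \<psi>_def using Llin[OF TF] by (simp add: T_def s_def algebra_simps)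
  have "inj \<psi>" by (metis Gpsi injI)
  hence "bij \<psi>" using finite_UNIV_inj_surj[of \<psi>] by (simp add: bij_def)
  hence bphi: "bij \<phi>" using L_bij phi_eq bij_comp[of \<psi> L]
    by (metis comp_apply ext)
  have "inv \<phi> = (\<lambda>y. G (inv L y))"
  proof
    fix y
    obtain x where y: "y = \<phi> x" using bphi by (metis bij_def surj_def)
    have "inv \<phi> y = x" using y bphi by (simp add: bij_def)
    moreover have "G (inv L y) = x" using y phi_eq Gpsi L_bij by (simp add: bij_def)
    ultimately show "inv \<phi> y = G (inv L y)" by simp
  qed
  thus ?thesis using bphi unfolding \<phi>_def G_def by simp
qed

end
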